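(* Let $f,g\colon X\to Y$ be continuous maps and let $u_0,\dots,u_k\in\mathcal{J}(f,g)$ be cohomology classes with $u_0\smile\cdots\smile u_k\neq 0$. Then $\mathrm{D}(f,g)\geq \sum_{j=0}^k \mathrm{hw}_{f,g}(u_j)$.
   Context: $R$ is a commutative ring with unit and $H^*(-;R)$ is cohomology with coefficients in $R$; $\mathcal{J}(f,g)\subset H^*(X;R)$ is the image of $f^*-g^*\colon H^*(Y;R)\to H^*(X;R)$. For continuous maps $f,g\colon X\to Y$, the homotopic distance $\mathrm{D}(f,g)$ is the least integer $n\geq 0$ such that there is an open cover $\{U_0,\dots,U_n\}$ of $X$ with $f|_{U_j}\simeq g|_{U_j}$ for all $j$ ($\infty$ if none exists). Homotopy weight: for $u\in H^*(X;R)$, $\mathrm{hw}_{f,g}(u)=k+1$ where $k$ is the greatest integer such that for every topological space $A$ and every continuous map $\phi\colon A\to X$ with $\mathrm{D}(f\circ\phi,g\circ\phi)\leq k$ one has $\phi^*u=0\in H^*(A;R)$; and $\mathrm{hw}_{f,g}(0)=\infty$. *)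

theory Defs
  imports "HOL-Homology.Homology" "HOL-Library.Extended_Nat"
begin

type_synonym ('a, 'r) cochain = "((nat \<Rightarrow> real) \<Rightarrow> 'a) \<Rightarrow> 'r"

definition cochain :: "nat \<Rightarrow> 'a topology \<Rightarrow> ('a, 'r::comm_ring_1) cochain \<Rightarrow> bool" where
  "cochain n X c \<equiv> (\<forall>\<sigma>. \<not> singular_simplex n X \<sigma> \<longrightarrow> c \<sigma> = 0)"

definition coboundary :: "nat \<Rightarrow> 'a topology \<Rightarrow> ('a, 'r::comm_ring_1) cochain \<Rightarrow> ('a, 'r) cochain" where
  "coboundary n X c \<equiv> (\<lambda>\<sigma>. if singular_simplex (Suc n) X \<sigma>
      then (\<Sum>i\<le>Suc n. (-1) ^ i * c (singular_face (Suc n) i \<sigma>)) else 0)"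

definition cocycle :: "nat \<Rightarrow> 'a topology \<Rightarrow> ('a, 'r::comm_ring_1) cochain \<Rightarrow> bool" where
  "cocycle n X c \<equiv> cochain n X c \<and> coboundary n X c = (\<lambda>_. 0)"

definition is_coboundary :: "nat \<Rightarrow> 'a topology \<Rightarrow> ('a, 'r::comm_ring_1) cochain \<Rightarrow> bool" where
  "is_coboundary n X c \<equiv> (n = 0 \<and> c = (\<lambda>_. 0)) \<or>
      (\<exists>m b. n = Suc m \<and> cochain m X b \<and> c = coboundary m X b)"

text \<open>Elements of the total cohomology H^*(X;R) are represented by graded cocycles
  (finitely many nonzero homogeneous components); two representatives give the
  same class iff each homogeneous difference is a coboundary.\<close>

definition gcocycle :: "'a topology \<Rightarrow> (nat \<Rightarrow> ('a, 'r::comm_ring_1) cochain) \<Rightarrow> bool" where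
  "gcocycle X u \<equiv> (\<forall>n. cocycle n X (u n)) \<and> finite {n. u n \<noteq> (\<lambda>_. 0)}"

definition cohomologous :: "'a topology \<Rightarrow> (nat \<Rightarrow> ('a, 'r::comm_ring_1) cochain)
    \<Rightarrow> (nat \<Rightarrow> ('a, 'r) cochain) \<Rightarrow> bool" where
  "cohomologous X u v \<equiv> (\<forall>n. is_coboundary n X (\<lambda>\<sigma>. u n \<sigma> - v n \<sigma>))"

definition gzero :: "nat \<Rightarrow> ('a, 'r::comm_ring_1) cochain" where
  "gzero \<equiv> (\<lambda>n \<sigma>. 0)"

definition pullback :: "nat \<Rightarrow> 'b topology \<Rightarrow> ('b \<Rightarrow> 'a) \<Rightarrow> ('a, 'r::comm_ring_1) cochain \<Rightarrow> ('b, 'r) cochain" where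
  "pullback n A \<phi> c \<equiv> (\<lambda>\<sigma>. if singular_simplex n A \<sigma> then c (simplex_map n \<phi> \<sigma>) else 0)"

definition gpullback :: "'b topology \<Rightarrow> ('b \<Rightarrow> 'a) \<Rightarrow> (nat \<Rightarrow> ('a, 'r::comm_ring_1) cochain) \<Rightarrow> nat \<Rightarrow> ('b, 'r) cochain" where
  "gpullback A \<phi> u \<equiv> (\<lambda>n. pullback n A \<phi> (u n))"

text \<open>Front p-face and back q-face of a (p+q)-simplex (Alexander--Whitney).\<close>
definition front_face :: "nat \<Rightarrow> ((nat \<Rightarrow> real) \<Rightarrow> 'a) \<Rightarrow> (nat \<Rightarrow> real) \<Rightarrow> 'a" where
  "front_face p \<sigma> \<equiv> restrict \<sigma> (standard_simplex p)"

definition back_face :: "nat \<Rightarrow> nat \<Rightarrow> ((nat \<Rightarrow> real) \<Rightarrow> 'a) \<Rightarrow> (nat \<Rightarrow> real) \<Rightarrow> 'a" where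
  "back_face p q \<sigma> \<equiv> restrict (\<sigma> \<circ> (\<lambda>x i. if i < p then 0 else x (i - p))) (standard_simplex q)"

definition cup_cochain :: "'a topology \<Rightarrow> nat \<Rightarrow> nat \<Rightarrow> ('a, 'r::comm_ring_1) cochain
    \<Rightarrow> ('a, 'r) cochain \<Rightarrow> ('a, 'r) cochain" where
  "cup_cochain X p q a b \<equiv> (\<lambda>\<sigma>. if singular_simplex (p + q) X \<sigma>
      then a (front_face p \<sigma>) * b (back_face p q \<sigma>) else 0)"

definition gcup :: "'a topology \<Rightarrow> (nat \<Rightarrow> ('a, 'r::comm_ring_1) cochain)
    \<Rightarrow> (nat \<Rightarrow> ('a, 'r) cochain) \<Rightarrow> nat \<Rightarrow> ('a, 'r) cochain" where
  "gcup X u v \<equiv> (\<lambda>n \<sigma>. \<Sum>p\<le>n. cup_cochain X p (n - p) (u p) (v (n - p)) \<sigma>)"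

fun cupprod :: "'a topology \<Rightarrow> (nat \<Rightarrow> nat \<Rightarrow> ('a, 'r::comm_ring_1) cochain) \<Rightarrow> nat \<Rightarrow> nat \<Rightarrow> ('a, 'r) cochain" where
  "cupprod X u 0 = u 0"
| "cupprod X u (Suc k) = gcup X (cupprod X u k) (u (Suc k))"

definition in_J :: "'a topology \<Rightarrow> 'b topology \<Rightarrow> ('a \<Rightarrow> 'b) \<Rightarrow> ('a \<Rightarrow> 'b)
    \<Rightarrow> (nat \<Rightarrow> ('a, 'r::comm_ring_1) cochain) \<Rightarrow> bool" where
  "in_J X Y f g u \<equiv> gcocycle X u \<and> (\<exists>y. gcocycle Y y \<and>
      cohomologous X u (\<lambda>n \<sigma>. gpullback X f y n \<sigma> - gpullback X g y n \<sigma>))"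

definition hdist :: "'a topology \<Rightarrow> 'b topology \<Rightarrow> ('a \<Rightarrow> 'b) \<Rightarrow> ('a \<Rightarrow> 'b) \<Rightarrow> enat" where
  "hdist X Y f g \<equiv>
    (let P = (\<lambda>n. \<exists>U :: nat \<Rightarrow> 'a set. (\<forall>j\<le>n. openin X (U j)) \<and> (\<Union>j\<le>n. U j) = topspace X
                \<and> (\<forall>j\<le>n. homotopic_with (\<lambda>h. True) (subtopology X (U j)) Y f g))
     in if (\<exists>n. P n) then enat (LEAST n. P n) else \<infinity>)"

text \<open>Homotopy weight hw_{f,g}(u); the test spaces A range over topologies on the
  carrier type of X.\<close>
definition hw :: "'a topology \<Rightarrow> 'b topology \<Rightarrow> ('a \<Rightarrow> 'b) \<Rightarrow> ('a \<Rightarrow> 'b)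
    \<Rightarrow> (nat \<Rightarrow> ('a, 'r::comm_ring_1) cochain) \<Rightarrow> enat" where
  "hw X Y f g u \<equiv>
    (if cohomologous X u gzero then \<infinity>
     else Sup ({0} \<union> {enat (Suc k) | k. \<forall>(A :: 'a topology) \<phi>. continuous_map A X \<phi> \<and>
              hdist A Y (f \<circ> \<phi>) (g \<circ> \<phi>) \<le> enat k \<longrightarrow> cohomologous A (gpullback A \<phi> u) gzero}))"

end

theory Submission
  imports Defs
begin


definition ev :: "('a,'r::comm_ring_1) cochain \<Rightarrow> 'a chain \<Rightarrow> 'r" where
  "ev c x = (\<Sum>i\<in>Poly_Mapping.keys x. of_int (poly_mapping.lookup x i) * c i)"

lemma ev_superset:
  assumes "finite S" "Poly_Mapping.keys x \<subseteq> S"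
  shows "ev c x = (\<Sum>i\<in>S. of_int (poly_mapping.lookup x i) * c i)"
  unfolding ev_def
  by (rule sum.mono_neutral_left) (use assms in \<open>auto simp: in_keys_iff\<close>)

lemma ev_diff: "ev c (a - b) = ev c a - ev c b"
proof -
  let ?S = "Poly_Mapping.keys a \<union> Poly_Mapping.keys b"
  have f: "finite ?S" by simp
  have ka: "Poly_Mapping.keys a \<subseteq> ?S" and kb: "Poly_Mapping.keys b \<subseteq> ?S" by auto
  have kab: "Poly_Mapping.keys (a - b) \<subseteq> ?S" using keys_diff[of a b] by blast
  have "ev c (a - b) = (\<Sum>i\<in>?S. of_int (poly_mapping.lookup (a - b) i) * c i)"
    by (rule ev_superset[OF f kab])
  also have "\<dots> = (\<Sum>i\<in>?S. of_int (poly_mapping.lookup a i) * c i - of_int (poly_mapping.lookup b i) * c i)"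
    by (rule sum.cong[OF refl]) (simp only: lookup_minus of_int_diff left_diff_distrib)
  also have "\<dots> = (\<Sum>i\<in>?S. of_int (poly_mapping.lookup a i) * c i) - (\<Sum>i\<in>?S. of_int (poly_mapping.lookup b i) * c i)"
    by (rule sum_subtractf)
  also have "\<dots> = ev c a - ev c b"
    by (simp only: ev_superset[OF f ka] ev_superset[OF f kb])
  finally show ?thesis .
qed

lemma ev_add: "ev c (a + b) = ev c a + ev c b"
proof -
  let ?S = "Poly_Mapping.keys a \<union> Poly_Mapping.keys b"
  have f: "finite ?S" by simp
  have ka: "Poly_Mapping.keys a \<subseteq> ?S" and kb: "Poly_Mapping.keys b \<subseteq> ?S" by auto
  have kab: "Poly_Mapping.keys (a + b) \<subseteq> ?S" using keys_add[of a b] by blast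
  have "ev c (a + b) = (\<Sum>i\<in>?S. of_int (poly_mapping.lookup (a + b) i) * c i)"
    by (rule ev_superset[OF f kab])
  also have "\<dots> = (\<Sum>i\<in>?S. of_int (poly_mapping.lookup a i) * c i + of_int (poly_mapping.lookup b i) * c i)"
    by (rule sum.cong[OF refl]) (simp only: lookup_add of_int_add distrib_right)
  also have "\<dots> = (\<Sum>i\<in>?S. of_int (poly_mapping.lookup a i) * c i) + (\<Sum>i\<in>?S. of_int (poly_mapping.lookup b i) * c i)"
    by (rule sum.distrib)
  also have "\<dots> = ev c a + ev c b"
    by (simp only: ev_superset[OF f ka] ev_superset[OF f kb])
  finally show ?thesis .
qed

lemma ev_0 [simp]: "ev c 0 = 0"
  by (simp add: ev_def)

lemma ev_of [simp]: "ev c (frag_of s) = c s"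
  by (simp add: ev_def)

lemma ev_cmul [simp]: "ev c (frag_cmul k x) = of_int k * ev c x"
proof -
  have "ev c (frag_cmul k x) = (\<Sum>i\<in>Poly_Mapping.keys x. of_int (poly_mapping.lookup (frag_cmul k x) i) * c i)"
    by (rule ev_superset) (simp_all add: keys_cmul)
  then show ?thesis by (simp add: ev_def sum_distrib_left mult.assoc)
qed

lemma ev_sum: "ev c (\<Sum>i\<in>I. f i) = (\<Sum>i\<in>I. ev c (f i))"
  by (induction I rule: infinite_finite_induct) (auto simp: ev_add)

lemma ev_cong: "(\<And>s. s \<in> Poly_Mapping.keys x \<Longrightarrow> c s = d s) \<Longrightarrow> ev c x = ev d x"
  by (simp add: ev_def)

lemma ev_zero_on: "(\<And>s. s \<in> Poly_Mapping.keys x \<Longrightarrow> c s = 0) \<Longrightarrow> ev c x = 0"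
  by (simp add: ev_def)

lemma ev_fun_diff: "ev (\<lambda>s. a s - b s) x = ev a x - ev b x"
  by (simp add: ev_def algebra_simps sum_subtractf)

lemma ev_fun_zero [simp]: "ev (\<lambda>s. 0) x = 0"
  by (simp add: ev_def)

lemma coboundary_ev:
  assumes "singular_simplex (Suc n) X \<sigma>"
  shows "coboundary n X c \<sigma> = ev c (chain_boundary (Suc n) (frag_of \<sigma>))"
proof -
  have "ev c (chain_boundary (Suc n) (frag_of \<sigma>)) = (\<Sum>k\<le>Suc n. (-1)^k * c (singular_face (Suc n) k \<sigma>))"
    unfolding chain_boundary_def by (simp only: frag_extend_of ev_sum ev_cmul ev_of if_False nat.distinct) simp
  then show ?thesis using assms by (simp add: coboundary_def)
qed

lemma ev_coboundary:
  assumes "singular_chain (Suc n) X d"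
  shows "ev (coboundary n X c) d = ev c (chain_boundary (Suc n) d)"
  using assms unfolding singular_chain_def
proof (induction rule: frag_induction)
  case zero then show ?case by simp
next
  case (one x) then show ?case by (simp add: coboundary_ev)
next
  case (diff a b) then show ?case by (simp add: ev_diff chain_boundary_diff)
qed

lemma coboundary_coboundary:
  "coboundary (Suc n) X (coboundary n X c) = (\<lambda>_. 0)"
proof
  fix \<sigma>
  show "coboundary (Suc n) X (coboundary n X c) \<sigma> = 0"
  proof (cases "singular_simplex (Suc (Suc n)) X \<sigma>")
    case True
    have sc: "singular_chain (Suc n) X (chain_boundary (Suc (Suc n)) (frag_of \<sigma>))"
      using True by (simp add: singular_chain_boundary_alt singular_chain_of)
    have "coboundary (Suc n) X (coboundary n X c) \<sigma> = ev (coboundary n X c) (chain_boundary (Suc (Suc n)) (frag_of \<sigma>))"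
      using True coboundary_ev by blast
    also have "\<dots> = ev c (chain_boundary (Suc n) (chain_boundary (Suc (Suc n)) (frag_of \<sigma>)))"
      using sc ev_coboundary by blast
    also have "\<dots> = 0"
      using True by (simp add: chain_boundary_boundary_alt singular_chain_of)
    finally show ?thesis .
  qed (simp add: coboundary_def)
qed

lemma coboundary_diff:
  "coboundary n X (\<lambda>s. a s - b s) = (\<lambda>s. coboundary n X a s - coboundary n X b s)"
  by (auto simp: coboundary_def algebra_simps sum_subtractf)

lemma coboundary_add:
  "coboundary n X (\<lambda>s. a s + b s) = (\<lambda>s. coboundary n X a s + coboundary n X b s)"
  by (auto simp: coboundary_def algebra_simps sum.distrib)

lemma coboundary_zero [simp]: "coboundary n X (\<lambda>s. 0) = (\<lambda>s. 0)"
  by (auto simp: coboundary_def)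

lemma ev_cocycle_boundary:
  assumes "cocycle n X z" "singular_chain (Suc n) X d"
  shows "ev z (chain_boundary (Suc n) d) = 0"
  using assms ev_coboundary[OF assms(2), of z] by (simp add: cocycle_def)



definition shp :: "nat \<Rightarrow> (nat \<Rightarrow> real) \<Rightarrow> nat \<Rightarrow> real" where
  "shp p x = (\<lambda>i. if i < p then 0 else x (i - p))"

lemma back_face_shp: "back_face p q \<sigma> = restrict (\<sigma> \<circ> shp p) (standard_simplex q)"
  unfolding back_face_def shp_def[abs_def] by simp

lemma shp_in:
  assumes "x \<in> standard_simplex q"
  shows "shp p x \<in> standard_simplex (p + q)"
proof -
  have x01: "\<And>i. 0 \<le> x i \<and> x i \<le> 1" and xz: "\<And>i. i > q \<Longrightarrow> x i = 0" and sx: "(\<Sum>i\<le>q. x i) = 1"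
    using assms by (auto simp: standard_simplex_def)
  have "(\<Sum>i\<le>p+q. shp p x i) = (\<Sum>i\<in>{p..p+q}. shp p x i)"
    by (rule sum.mono_neutral_right) (auto simp: shp_def)
  also have "\<dots> = (\<Sum>i\<in>{0+p..q+p}. x (i - p))"
    by (rule sum.cong) (auto simp: shp_def)
  also have "\<dots> = (\<Sum>i\<in>{0..q}. x i)"
    by (simp only: sum.shift_bounds_cl_nat_ivl) simp
  also have "\<dots> = 1" using sx by (simp add: atLeast0AtMost)
  finally show ?thesis
    using x01 xz by (auto simp: standard_simplex_def shp_def)
qed

lemma continuous_shp:
  "continuous_map (subtopology (powertop_real UNIV) (standard_simplex q))
                  (subtopology (powertop_real UNIV) (standard_simplex (p + q))) (shp p)"
proof (clarsimp simp add: continuous_map_in_subtopology shp_in continuous_map_componentwise image_subset_iff)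
  fix i
  have "continuous_map (powertop_real UNIV) euclideanreal (\<lambda>x. if i < p then 0 else x (i - p))"
    by (auto intro: continuous_map_product_projection)
  then show "continuous_map (subtopology (powertop_real UNIV) (standard_simplex q)) euclideanreal (\<lambda>x. shp p x i)"
    by (simp add: shp_def continuous_map_from_subtopology)
qed

lemma singular_front:
  assumes "singular_simplex (p + q) X \<sigma>"
  shows "singular_simplex p X (front_face p \<sigma>)"
proof -
  have c: "continuous_map (subtopology (powertop_real UNIV) (standard_simplex (p+q))) X \<sigma>"
    using assms by (simp add: singular_simplex_def)
  have "continuous_map (subtopology (powertop_real UNIV) (standard_simplex p)) X \<sigma>"
    by (rule continuous_map_from_subtopology_mono[OF c]) (simp add: standard_simplex_mono)
  then have "continuous_map (subtopology (powertop_real UNIV) (standard_simplex p)) X (restrict \<sigma> (standard_simplex p))"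
    by (rule continuous_map_eq) (simp add: topspace_subtopology)
  then show ?thesis by (simp add: singular_simplex_def front_face_def)
qed

lemma singular_back:
  assumes "singular_simplex (p + q) X \<sigma>"
  shows "singular_simplex q X (back_face p q \<sigma>)"
proof -
  have c: "continuous_map (subtopology (powertop_real UNIV) (standard_simplex (p+q))) X \<sigma>"
    using assms by (simp add: singular_simplex_def)
  have "continuous_map (subtopology (powertop_real UNIV) (standard_simplex q)) X (\<sigma> \<circ> shp p)"
    by (rule continuous_map_compose[OF continuous_shp c])
  then have "continuous_map (subtopology (powertop_real UNIV) (standard_simplex q)) X (restrict (\<sigma> \<circ> shp p) (standard_simplex q))"
    by (rule continuous_map_eq) (simp add: topspace_subtopology)
  then show ?thesis by (simp add: singular_simplex_def back_face_shp)
qed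

lemma F1:
  assumes "i \<le> Suc p"
  shows "front_face p (singular_face (Suc (p+q)) i \<sigma>) = singular_face (Suc p) i (front_face (Suc p) \<sigma>)"
proof
  fix x
  show "front_face p (singular_face (Suc (p+q)) i \<sigma>) x = singular_face (Suc p) i (front_face (Suc p) \<sigma>) x"
  proof (cases "x \<in> standard_simplex p")
    case True
    have "x \<in> standard_simplex (p+q)" using True standard_simplex_mono[of p "p+q"] by auto
    moreover have "simplical_face i x \<in> standard_simplex (Suc p)"
      using simplical_face_in_standard_simplex[of "Suc p" i x] True assms by simp
    ultimately show ?thesis using True
      by (simp add: front_face_def singular_face_def)
  qed (simp add: front_face_def singular_face_def)
qed

lemma F2:
  assumes "i \<le> p"
  shows "back_face p q (singular_face (Suc (p+q)) i \<sigma>) = back_face (Suc p) q \<sigma>"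
proof
  fix x
  show "back_face p q (singular_face (Suc (p+q)) i \<sigma>) x = back_face (Suc p) q \<sigma> x"
  proof (cases "x \<in> standard_simplex q")
    case True
    have "shp p x \<in> standard_simplex (p+q)" using True shp_in by blast
    moreover have "simplical_face i (shp p x) = shp (Suc p) x"
    proof
      fix j
      show "simplical_face i (shp p x) j = shp (Suc p) x j"
        using assms by (auto simp: simplical_face_def shp_def)
    qed
    ultimately show ?thesis using True
      by (simp add: back_face_shp singular_face_def)
  qed (simp add: back_face_shp)
qed

lemma F3:
  assumes "p < i"
  shows "front_face p (singular_face (Suc (p+q)) i \<sigma>) = front_face p \<sigma>"
proof
  fix x
  show "front_face p (singular_face (Suc (p+q)) i \<sigma>) x = front_face p \<sigma> x"
  proof (cases "x \<in> standard_simplex p")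
    case True
    have "x \<in> standard_simplex (p+q)" using True standard_simplex_mono[of p "p+q"] by auto
    moreover have "simplical_face i x = x"
    proof
      fix j
      have "\<And>j. j > p \<Longrightarrow> x j = 0" using True by (simp add: standard_simplex_def)
      then show "simplical_face i x j = x j"
        using assms by (auto simp: simplical_face_def)
    qed
    ultimately show ?thesis using True
      by (simp add: front_face_def singular_face_def)
  qed (simp add: front_face_def singular_face_def)
qed

lemma F4:
  assumes "p \<le> i" "i \<le> Suc (p+q)"
  shows "back_face p q (singular_face (Suc (p+q)) i \<sigma>) = singular_face (Suc q) (i - p) (back_face p (Suc q) \<sigma>)"
proof
  fix x
  show "back_face p q (singular_face (Suc (p+q)) i \<sigma>) x = singular_face (Suc q) (i - p) (back_face p (Suc q) \<sigma>) x"
  proof (cases "x \<in> standard_simplex q")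
    case True
    have "shp p x \<in> standard_simplex (p+q)" using True shp_in by blast
    moreover have "simplical_face (i-p) x \<in> standard_simplex (Suc q)"
      using simplical_face_in_standard_simplex[of "Suc q" "i-p" x] True assms by simp
    moreover have "simplical_face i (shp p x) = shp p (simplical_face (i-p) x)"
    proof
      fix j
      show "simplical_face i (shp p x) j = shp p (simplical_face (i-p) x) j"
        using assms by (auto simp: simplical_face_def shp_def)
    qed
    ultimately show ?thesis using True
      by (simp add: back_face_shp singular_face_def)
  qed (simp add: back_face_shp singular_face_def)
qed



lemma leibniz_alg:
  fixes Cf Df :: "nat \<Rightarrow> 'r::comm_ring_1" and cz dk :: 'r
  assumes "Cf (Suc p) = cz" "Df 0 = dk"
  shows "(\<Sum>i\<le>Suc (p+q). (-1)^i * (if i \<le> p then Cf i * dk else cz * Df (i - p)))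
       = (\<Sum>i\<le>Suc p. (-1)^i * Cf i) * dk + (-1)^p * (cz * (\<Sum>i\<le>Suc q. (-1)^i * Df i))"
proof -
  have split: "{..Suc (p+q)} = {..p} \<union> {Suc p..Suc (p+q)}" by auto
  have "(\<Sum>i\<le>Suc (p+q). (-1)^i * (if i \<le> p then Cf i * dk else cz * Df (i - p)))
      = (\<Sum>i\<le>p. (-1)^i * (if i \<le> p then Cf i * dk else cz * Df (i - p)))
        + (\<Sum>i\<in>{Suc p..Suc (p+q)}. (-1)^i * (if i \<le> p then Cf i * dk else cz * Df (i - p)))"
    unfolding split by (rule sum.union_disjoint) auto
  also have "(\<Sum>i\<le>p. (-1)^i * (if i \<le> p then Cf i * dk else cz * Df (i - p))) = (\<Sum>i\<le>p. (-1)^i * Cf i) * dk"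
    by (simp add: sum_distrib_right mult.assoc)
  also have "(\<Sum>i\<in>{Suc p..Suc (p+q)}. (-1)^i * (if i \<le> p then Cf i * dk else cz * Df (i - p)))
           = (\<Sum>i\<in>{Suc p..Suc (p+q)}. (-1)^i * (cz * Df (i - p)))"
    by (rule sum.cong) auto
  also have "\<dots> = (\<Sum>j\<in>{0 + Suc p..q + Suc p}. (-1)^j * (cz * Df (j - p)))"
    by (simp add: add.commute)
  also have "\<dots> = (\<Sum>j\<in>{0..q}. (-1)^(j + Suc p) * (cz * Df (Suc j)))"
    by (simp only: sum.shift_bounds_cl_nat_ivl) (simp add: Suc_diff_le)
  also have "\<dots> = (-1)^p * (cz * (\<Sum>j\<le>q. (-1)^(Suc j) * Df (Suc j)))"
    by (simp add: sum_distrib_left power_add atLeast0AtMost algebra_simps)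
  finally have L: "(\<Sum>i\<le>Suc (p+q). (-1)^i * (if i \<le> p then Cf i * dk else cz * Df (i - p)))
     = (\<Sum>i\<le>p. (-1)^i * Cf i) * dk + (-1)^p * (cz * (\<Sum>j\<le>q. (-1)^(Suc j) * Df (Suc j)))" .
  have R1: "(\<Sum>i\<le>Suc p. (-1)^i * Cf i) = (\<Sum>i\<le>p. (-1)^i * Cf i) - (-1)^p * cz"
    using assms by simp
  have R2: "(\<Sum>i\<le>Suc q. (-1)^i * Df i) = dk + (\<Sum>j\<le>q. (-1)^(Suc j) * Df (Suc j))"
    by (simp only: sum.atMost_Suc_shift) (simp add: assms)
  show ?thesis unfolding L R1 R2 by (simp add: algebra_simps)
qed

lemma leibniz:
  "coboundary (p+q) X (cup_cochain X p q a b) =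
   (\<lambda>\<sigma>. cup_cochain X (Suc p) q (coboundary p X a) b \<sigma> + (-1)^p * cup_cochain X p (Suc q) a (coboundary q X b) \<sigma>)"
proof
  fix \<sigma>
  show "coboundary (p+q) X (cup_cochain X p q a b) \<sigma> =
        cup_cochain X (Suc p) q (coboundary p X a) b \<sigma> + (-1)^p * cup_cochain X p (Suc q) a (coboundary q X b) \<sigma>"
  proof (cases "singular_simplex (Suc (p+q)) X \<sigma>")
    case False
    then show ?thesis by (simp add: coboundary_def cup_cochain_def)
  next
    case True
    define A where "A i = a (singular_face (Suc p) i (front_face (Suc p) \<sigma>))" for i
    define Bi where "Bi i = b (singular_face (Suc q) i (back_face p (Suc q) \<sigma>))" for i
    define A0 where "A0 = a (front_face p \<sigma>)"
    define Bk where "Bk = b (back_face (Suc p) q \<sigma>)"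
    have ssf: "singular_simplex (Suc p) X (front_face (Suc p) \<sigma>)"
      using singular_front[of "Suc p" q X \<sigma>] True by simp
    have ssb: "singular_simplex (Suc q) X (back_face p (Suc q) \<sigma>)"
      using singular_back[of p "Suc q" X \<sigma>] True by simp
    have hA: "A (Suc p) = A0"
      unfolding A_def A0_def using F1[of "Suc p" p q \<sigma>] F3[of p "Suc p" q \<sigma>] by simp
    have hB: "Bi 0 = Bk"
      unfolding Bi_def Bk_def using F4[of p p q \<sigma>] F2[of p p q \<sigma>] by simp
    have hterm: "cup_cochain X p q a b (singular_face (Suc (p+q)) i \<sigma>) =
                (if i \<le> p then A i * Bk else A0 * Bi (i - p))" if "i \<le> Suc (p+q)" for i
    proof -
      have "singular_simplex (p+q) X (singular_face (Suc (p+q)) i \<sigma>)"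
        using singular_simplex_singular_face[OF True _ that] by simp
      then have "cup_cochain X p q a b (singular_face (Suc (p+q)) i \<sigma>) =
           a (front_face p (singular_face (Suc (p+q)) i \<sigma>)) * b (back_face p q (singular_face (Suc (p+q)) i \<sigma>))"
        by (simp add: cup_cochain_def)
      also have "\<dots> = (if i \<le> p then A i * Bk else A0 * Bi (i - p))"
      proof (cases "i \<le> p")
        case True
        then show ?thesis unfolding A_def Bk_def using F1[of i p q \<sigma>] F2[of i p q \<sigma>] by simp
      next
        case False
        then show ?thesis unfolding A0_def Bi_def using F3[of p i q \<sigma>] F4[of p i q \<sigma>] that by simp
      qed
      finally show ?thesis .
    qed
    have "coboundary (p+q) X (cup_cochain X p q a b) \<sigma> =
          (\<Sum>i\<le>Suc (p+q). (-1)^i * cup_cochain X p q a b (singular_face (Suc (p+q)) i \<sigma>))"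
      using True by (simp add: coboundary_def)
    also have "\<dots> = (\<Sum>i\<le>Suc (p+q). (-1)^i * (if i \<le> p then A i * Bk else A0 * Bi (i - p)))"
      by (rule sum.cong) (simp_all add: hterm)
    also have "\<dots> = (\<Sum>i\<le>Suc p. (-1)^i * A i) * Bk + (-1)^p * (A0 * (\<Sum>i\<le>Suc q. (-1)^i * Bi i))"
      by (rule leibniz_alg[where Cf=A and Df=Bi and cz=A0 and dk=Bk, OF hA hB])
    also have "(\<Sum>i\<le>Suc p. (-1)^i * A i) * Bk = cup_cochain X (Suc p) q (coboundary p X a) b \<sigma>"
      using True ssf by (simp add: cup_cochain_def coboundary_def A_def Bk_def)
    also have "A0 * (\<Sum>i\<le>Suc q. (-1)^i * Bi i) = cup_cochain X p (Suc q) a (coboundary q X b) \<sigma>"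
      using True ssb by (simp add: cup_cochain_def coboundary_def A0_def Bi_def)
    finally show ?thesis .
  qed
qed



lemma cochain_cup: "cochain (p+q) X (cup_cochain X p q a b)"
  by (simp add: cochain_def cup_cochain_def)

lemma cochain_coboundary: "cochain (Suc n) X (coboundary n X c)"
  by (simp add: cochain_def coboundary_def)

lemma cup_left_zero [simp]: "cup_cochain X p q (\<lambda>_. 0) b = (\<lambda>_. 0)"
  by (rule ext) (simp add: cup_cochain_def)

lemma cup_right_zero [simp]: "cup_cochain X p q a (\<lambda>_. 0) = (\<lambda>_. 0)"
  by (rule ext) (simp add: cup_cochain_def)

lemma coboundary_cmul: "coboundary n X (\<lambda>s. r * c s) = (\<lambda>s. r * coboundary n X c s)"
  by (auto simp: coboundary_def sum_distrib_left algebra_simps)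

lemma coboundary_sum: "coboundary n X (\<lambda>s. \<Sum>i\<in>I. f i s) = (\<lambda>s. \<Sum>i\<in>I. coboundary n X (f i) s)"
proof
  fix s
  show "coboundary n X (\<lambda>s. \<Sum>i\<in>I. f i s) s = (\<Sum>i\<in>I. coboundary n X (f i) s)"
  proof (cases "singular_simplex (Suc n) X s")
    case True
    then show ?thesis unfolding coboundary_def by (simp only: if_True sum_distrib_left) (rule sum.swap)
  qed (simp add: coboundary_def)
qed

lemma is_coboundary_SucD:
  assumes "is_coboundary (Suc m) X c"
  obtains b where "cochain m X b" "c = coboundary m X b"
  using assms by (auto simp: is_coboundary_def)

lemma is_coboundary_SucI:
  "cochain m X b \<Longrightarrow> c = coboundary m X b \<Longrightarrow> is_coboundary (Suc m) X c"
  by (auto simp: is_coboundary_def)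

lemma is_coboundary_zero [simp]: "is_coboundary n X (\<lambda>_. 0)"
proof (cases n)
  case 0 then show ?thesis by (simp add: is_coboundary_def)
next
  case (Suc m)
  have "cochain m X (\<lambda>_. 0)" by (simp add: cochain_def)
  moreover have "(\<lambda>_. 0) = coboundary m X (\<lambda>_. 0)" by simp
  ultimately show ?thesis using Suc is_coboundary_SucI by blast
qed

lemma is_coboundary_0D: "is_coboundary 0 X c \<Longrightarrow> c = (\<lambda>_. 0)"
  by (auto simp: is_coboundary_def)

lemma is_coboundary_add:
  assumes "is_coboundary n X a" "is_coboundary n X b"
  shows "is_coboundary n X (\<lambda>s. a s + b s)"
proof (cases n)
  case 0 then show ?thesis using assms by (auto dest!: is_coboundary_0D)
next
  case (Suc m)
  obtain a' where a': "cochain m X a'" "a = coboundary m X a'" using assms(1) Suc is_coboundary_SucD by metis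
  obtain b' where b': "cochain m X b'" "b = coboundary m X b'" using assms(2) Suc is_coboundary_SucD by metis
  have "cochain m X (\<lambda>s. a' s + b' s)" using a' b' by (simp add: cochain_def)
  moreover have "(\<lambda>s. a s + b s) = coboundary m X (\<lambda>s. a' s + b' s)"
    using a' b' by (simp add: coboundary_add)
  ultimately show ?thesis using Suc is_coboundary_SucI by blast
qed

lemma is_coboundary_cmul:
  assumes "is_coboundary n X a"
  shows "is_coboundary n X (\<lambda>s. r * a s)"
proof (cases n)
  case 0 then show ?thesis using assms by (auto dest!: is_coboundary_0D)
next
  case (Suc m)
  obtain a' where a': "cochain m X a'" "a = coboundary m X a'" using assms(1) Suc is_coboundary_SucD by metis
  have "cochain m X (\<lambda>s. r * a' s)" using a' by (simp add: cochain_def)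
  moreover have "(\<lambda>s. r * a s) = coboundary m X (\<lambda>s. r * a' s)"
    using a' by (simp add: coboundary_cmul)
  ultimately show ?thesis using Suc is_coboundary_SucI by blast
qed

lemma is_coboundary_diff:
  assumes "is_coboundary n X a" "is_coboundary n X b"
  shows "is_coboundary n X (\<lambda>s. a s - b s)"
proof -
  have "is_coboundary n X (\<lambda>s. a s + (-1) * b s)"
    by (rule is_coboundary_add[OF assms(1) is_coboundary_cmul[OF assms(2)]])
  then show ?thesis by simp
qed

lemma is_coboundary_sum:
  assumes "finite I" "\<And>i. i \<in> I \<Longrightarrow> is_coboundary n X (f i)"
  shows "is_coboundary n X (\<lambda>s. \<Sum>i\<in>I. f i s)"
  using assms
proof (induction I rule: finite_induct)
  case empty then show ?case by simp
next
  case (insert x F)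
  then show ?case using is_coboundary_add[of n X "f x" "\<lambda>s. \<Sum>i\<in>F. f i s"] by simp
qed

lemma cocycle_sum:
  assumes "\<And>i. i \<in> I \<Longrightarrow> cocycle n X (f i)"
  shows "cocycle n X (\<lambda>s. \<Sum>i\<in>I. f i s)"
  using assms by (auto simp: cocycle_def cochain_def coboundary_sum fun_eq_iff)

lemma cup_cocycle:
  assumes "cocycle p X a" "cocycle q X b"
  shows "cocycle (p+q) X (cup_cochain X p q a b)"
  using assms leibniz[of p q X a b] by (simp add: cocycle_def cochain_cup)

lemma cup_cob_left:
  assumes "is_coboundary p X a" "cocycle q X b"
  shows "is_coboundary (p+q) X (cup_cochain X p q a b)"
proof (cases p)
  case 0 then show ?thesis using assms by (auto dest!: is_coboundary_0D)
next
  case (Suc m)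
  obtain a' where a': "cochain m X a'" "a = coboundary m X a'" using assms(1) Suc is_coboundary_SucD by metis
  have "coboundary (m+q) X (cup_cochain X m q a' b) = cup_cochain X (Suc m) q a b"
    using leibniz[of m q X a' b] assms(2) a' by (simp add: cocycle_def)
  then show ?thesis using Suc cochain_cup[of m q X a' b]
    by (metis add_Suc is_coboundary_SucI)
qed

lemma cup_cob_right:
  assumes "cocycle p X a" "is_coboundary q X b"
  shows "is_coboundary (p+q) X (cup_cochain X p q a b)"
proof (cases q)
  case 0 then show ?thesis using assms by (auto dest!: is_coboundary_0D)
next
  case (Suc m)
  obtain b' where b': "cochain m X b'" "b = coboundary m X b'" using assms(2) Suc is_coboundary_SucD by metis
  have "coboundary (p+m) X (cup_cochain X p m a b') = (\<lambda>s. (-1)^p * cup_cochain X p q a b s)"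
    using leibniz[of p m X a b'] assms(1) b' Suc by (simp add: cocycle_def)
  then have "coboundary (p+m) X (\<lambda>s. (-1)^p * cup_cochain X p m a b' s) = cup_cochain X p q a b"
    by (simp add: coboundary_cmul)
  moreover have "cochain (p+m) X (\<lambda>s. (-1)^p * cup_cochain X p m a b' s)"
    by (simp add: cochain_def cup_cochain_def)
  ultimately show ?thesis using Suc
    by (metis add_Suc_right is_coboundary_SucI)
qed

definition gcocyc :: "'a topology \<Rightarrow> (nat \<Rightarrow> ('a, 'r::comm_ring_1) cochain) \<Rightarrow> bool" where
  "gcocyc X u \<equiv> (\<forall>n. cocycle n X (u n))"

definition gcob :: "'a topology \<Rightarrow> (nat \<Rightarrow> ('a, 'r::comm_ring_1) cochain) \<Rightarrow> bool" where
  "gcob X u \<equiv> (\<forall>n. is_coboundary n X (u n))"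

lemma gcup_cocyc:
  assumes "gcocyc X u" "gcocyc X v"
  shows "gcocyc X (gcup X u v)"
  unfolding gcocyc_def gcup_def
proof
  fix n
  show "cocycle n X (\<lambda>\<sigma>. \<Sum>p\<le>n. cup_cochain X p (n - p) (u p) (v (n - p)) \<sigma>)"
  proof (rule cocycle_sum)
    fix p assume "p \<in> {..n}"
    then have "p + (n - p) = n" by simp
    then show "cocycle n X (cup_cochain X p (n - p) (u p) (v (n - p)))"
      using cup_cocycle[of p X "u p" "n-p" "v (n-p)"] assms by (simp add: gcocyc_def)
  qed
qed

lemma gcup_cob_left:
  assumes "gcob X a" "gcocyc X v"
  shows "gcob X (gcup X a v)"
  unfolding gcob_def gcup_def
proof
  fix n
  show "is_coboundary n X (\<lambda>\<sigma>. \<Sum>p\<le>n. cup_cochain X p (n - p) (a p) (v (n - p)) \<sigma>)"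
  proof (rule is_coboundary_sum)
    fix p assume "p \<in> {..n}"
    then have "p + (n - p) = n" by simp
    then show "is_coboundary n X (cup_cochain X p (n - p) (a p) (v (n - p)))"
      using cup_cob_left[of p X "a p" "n-p" "v (n-p)"] assms by (simp add: gcocyc_def gcob_def)
  qed simp
qed

lemma gcup_cob_right:
  assumes "gcocyc X u" "gcob X a"
  shows "gcob X (gcup X u a)"
  unfolding gcob_def gcup_def
proof
  fix n
  show "is_coboundary n X (\<lambda>\<sigma>. \<Sum>p\<le>n. cup_cochain X p (n - p) (u p) (a (n - p)) \<sigma>)"
  proof (rule is_coboundary_sum)
    fix p assume "p \<in> {..n}"
    then have "p + (n - p) = n" by simp
    then show "is_coboundary n X (cup_cochain X p (n - p) (u p) (a (n - p)))"
      using cup_cob_right[of p X "u p" "n-p" "a (n-p)"] assms by (simp add: gcocyc_def gcob_def)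
  qed simp
qed

lemma cup_diff_left: "cup_cochain X p q (\<lambda>s. a s - a' s) b = (\<lambda>s. cup_cochain X p q a b s - cup_cochain X p q a' b s)"
  by (auto simp: cup_cochain_def algebra_simps)

lemma cup_diff_right: "cup_cochain X p q a (\<lambda>s. b s - b' s) = (\<lambda>s. cup_cochain X p q a b s - cup_cochain X p q a b' s)"
  by (auto simp: cup_cochain_def algebra_simps)

lemma gcup_diff_left: "gcup X (\<lambda>n s. a n s - a' n s) v = (\<lambda>n s. gcup X a v n s - gcup X a' v n s)"
  by (simp add: gcup_def cup_diff_left sum_subtractf)

lemma gcup_diff_right: "gcup X u (\<lambda>n s. a n s - a' n s) = (\<lambda>n s. gcup X u a n s - gcup X u a' n s)"
  by (simp add: gcup_def cup_diff_right sum_subtractf)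

lemma gcob_add: "gcob X a \<Longrightarrow> gcob X b \<Longrightarrow> gcob X (\<lambda>n s. a n s + b n s)"
  by (simp add: gcob_def is_coboundary_add)

lemma cohomologous_gcob: "cohomologous X u v \<longleftrightarrow> gcob X (\<lambda>n s. u n s - v n s)"
  by (simp add: cohomologous_def gcob_def)

lemma cupprod_cocyc:
  assumes "\<And>j. j \<le> k \<Longrightarrow> gcocyc X (u j)"
  shows "gcocyc X (cupprod X u k)"
  using assms by (induction k) (auto intro: gcup_cocyc)

lemma cupprod_cohom:
  assumes "\<And>j. j \<le> k \<Longrightarrow> gcocyc X (u j)" "\<And>j. j \<le> k \<Longrightarrow> gcocyc X (w j)"
    "\<And>j. j \<le> k \<Longrightarrow> cohomologous X (u j) (w j)"
  shows "cohomologous X (cupprod X u k) (cupprod X w k)"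
  using assms
proof (induction k)
  case 0 then show ?case by simp
next
  case (Suc k)
  let ?Pu = "cupprod X u k" and ?Pw = "cupprod X w k"
  have ih: "gcob X (\<lambda>n s. ?Pu n s - ?Pw n s)" using Suc by (simp add: cohomologous_gcob)
  have cw: "gcocyc X ?Pw" using Suc.prems(2) by (intro cupprod_cocyc) simp
  have g1: "gcob X (gcup X (\<lambda>n s. ?Pu n s - ?Pw n s) (u (Suc k)))"
    using gcup_cob_left[OF ih] Suc.prems(1) by simp
  have g2: "gcob X (gcup X ?Pw (\<lambda>n s. u (Suc k) n s - w (Suc k) n s))"
    using gcup_cob_right[OF cw] Suc.prems(3) by (simp add: cohomologous_gcob)
  have "gcob X (\<lambda>n s. gcup X (\<lambda>n s. ?Pu n s - ?Pw n s) (u (Suc k)) n s + gcup X ?Pw (\<lambda>n s. u (Suc k) n s - w (Suc k) n s) n s)"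
    by (rule gcob_add[OF g1 g2])
  then show ?case
    by (simp add: cohomologous_gcob gcup_diff_left gcup_diff_right)
qed

definition vanish :: "'a topology \<Rightarrow> 'a set \<Rightarrow> (nat \<Rightarrow> ('a, 'r::comm_ring_1) cochain) \<Rightarrow> bool" where
  "vanish X S g \<equiv> (\<forall>n \<sigma>. singular_simplex n (subtopology X S) \<sigma> \<longrightarrow> g n \<sigma> = 0)"

lemma vanish_gcup_left:
  assumes "vanish X S a"
  shows "vanish X S (gcup X a b)"
  unfolding vanish_def gcup_def
proof (intro allI impI sum.neutral ballI)
  fix n \<sigma> p
  assume ss: "singular_simplex n (subtopology X S) \<sigma>" and p: "p \<in> {..n}"
  then have "singular_simplex (p + (n-p)) (subtopology X S) \<sigma>" by simp
  then have "singular_simplex p (subtopology X S) (front_face p \<sigma>)" by (rule singular_front)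
  then show "cup_cochain X p (n - p) (a p) (b (n - p)) \<sigma> = 0"
    using assms by (simp add: vanish_def cup_cochain_def)
qed

lemma vanish_gcup_right:
  assumes "vanish X S b"
  shows "vanish X S (gcup X a b)"
  unfolding vanish_def gcup_def
proof (intro allI impI sum.neutral ballI)
  fix n \<sigma> p
  assume ss: "singular_simplex n (subtopology X S) \<sigma>" and p: "p \<in> {..n}"
  then have "singular_simplex (p + (n-p)) (subtopology X S) \<sigma>" by simp
  then have "singular_simplex (n-p) (subtopology X S) (back_face p (n-p) \<sigma>)" by (rule singular_back)
  then show "cup_cochain X p (n - p) (a p) (b (n - p)) \<sigma> = 0"
    using assms by (simp add: vanish_def cup_cochain_def)
qed

lemma cupprod_vanish:
  assumes "j \<le> k" "vanish X S (w j)"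
  shows "vanish X S (cupprod X w k)"
  using assms
proof (induction k)
  case 0 then show ?case by simp
next
  case (Suc k)
  then show ?case
    by (cases "j = Suc k") (auto intro: vanish_gcup_left vanish_gcup_right)
qed



definition hprop :: "(nat \<Rightarrow> 'a chain \<Rightarrow> 'a chain) \<Rightarrow> bool" where
  "hprop h \<equiv> (\<forall>p. h p 0 = 0) \<and> (\<forall>p c1 c2. h p (c1-c2) = h p c1 - h p c2) \<and>
     (\<forall>p X c. singular_chain p X c \<longrightarrow> singular_chain (Suc p) X (h p c)) \<and>
     (\<forall>p X c. singular_chain p X c \<longrightarrow>
        chain_boundary (Suc p) (h p c) + h (p - Suc 0) (chain_boundary p c) = singular_subdivision p c - c)"

definition hh :: "nat \<Rightarrow> 'a chain \<Rightarrow> 'a chain" where "hh = (SOME h. hprop h)"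

lemma hprop_hh: "hprop hh"
proof -
  obtain h :: "nat \<Rightarrow> 'a chain \<Rightarrow> 'a chain" where
        "\<And>p. h p 0 = 0"
        "\<And>p c1 c2. h p (c1-c2) = h p c1 - h p c2"
        "\<And>p X c. singular_chain p X c \<Longrightarrow> singular_chain (Suc p) X (h p c)"
        "\<And>p X c. singular_chain p X c
                 \<Longrightarrow> chain_boundary (Suc p) (h p c) + h (p - Suc 0) (chain_boundary p c) = singular_subdivision p c - c"
    using chain_homotopic_singular_subdivision by blast
  then have "hprop h" by (simp add: hprop_def)
  then show ?thesis unfolding hh_def by (rule someI[where P=hprop])
qed

lemma hh_0 [simp]: "hh p 0 = 0"
  using hprop_hh unfolding hprop_def by blast

lemma hh_diff: "hh p (a - b) = hh p a - hh p b"
  using hprop_hh unfolding hprop_def by blast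

lemma hh_chain: "singular_chain p X c \<Longrightarrow> singular_chain (Suc p) X (hh p c)"
  using hprop_hh unfolding hprop_def by blast

lemma hh_eq: "singular_chain p X c \<Longrightarrow>
   chain_boundary (Suc p) (hh p c) + hh (p - Suc 0) (chain_boundary p c) = singular_subdivision p c - c"
  using hprop_hh unfolding hprop_def by blast

lemma hh_minus: "hh p (- b) = - hh p b"
  using hh_diff[of p 0 b] by simp

lemma hh_add: "hh p (a + b) = hh p a + hh p b"
  using hh_diff[of p a "- b"] by (simp add: hh_minus)

lemma hh_sum: "hh p (\<Sum>i\<in>I. f i) = (\<Sum>i\<in>I. hh p (f i))"
  by (induction I rule: infinite_finite_induct) (auto simp: hh_add)

lemma sdi_chain: "singular_chain p Z c \<Longrightarrow> singular_chain p Z ((singular_subdivision p ^^ i) c)"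
  by (induction i) (auto intro: singular_chain_singular_subdivision)

lemma sdi_boundary:
  "singular_chain p X c \<Longrightarrow>
   chain_boundary p ((singular_subdivision p ^^ i) c) = (singular_subdivision (p - Suc 0) ^^ i) (chain_boundary p c)"
proof (induction i)
  case 0 then show ?case by simp
next
  case (Suc i)
  have "singular_chain p X ((singular_subdivision p ^^ i) c)" using Suc.prems by (rule sdi_chain)
  then show ?case using Suc by (simp add: chain_boundary_singular_subdivision)
qed

definition Dm :: "nat \<Rightarrow> nat \<Rightarrow> 'a chain \<Rightarrow> 'a chain" where
  "Dm M p c = (\<Sum>i<M. hh p ((singular_subdivision p ^^ i) c))"

lemma Dm_chain: "singular_chain p Z c \<Longrightarrow> singular_chain (Suc p) Z (Dm M p c)"
  unfolding Dm_def by (intro singular_chain_sum hh_chain sdi_chain)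

lemma Dm_diff: "Dm M p (a - b) = Dm M p a - Dm M p b"
  by (simp add: Dm_def singular_subdivision_power_diff hh_diff sum_subtractf)

lemma Dm_0 [simp]: "Dm M p 0 = 0"
  using Dm_diff[of M p 0 0] by simp

lemma Dm_eq:
  assumes "singular_chain p X c"
  shows "chain_boundary (Suc p) (Dm M p c) + Dm M (p - Suc 0) (chain_boundary p c) = (singular_subdivision p ^^ M) c - c"
proof (induction M)
  case 0 then show ?case by (simp add: Dm_def)
next
  case (Suc M)
  have sc: "singular_chain p X ((singular_subdivision p ^^ M) c)" using assms by (rule sdi_chain)
  have "Dm (Suc M) p c = Dm M p c + hh p ((singular_subdivision p ^^ M) c)"
    by (simp add: Dm_def)
  moreover have "Dm (Suc M) (p - Suc 0) (chain_boundary p c) = Dm M (p - Suc 0) (chain_boundary p c)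
      + hh (p - Suc 0) (chain_boundary p ((singular_subdivision p ^^ M) c))"
    by (simp add: Dm_def sdi_boundary[OF assms])
  ultimately have "chain_boundary (Suc p) (Dm (Suc M) p c) + Dm (Suc M) (p - Suc 0) (chain_boundary p c)
     = (chain_boundary (Suc p) (Dm M p c) + Dm M (p - Suc 0) (chain_boundary p c))
       + (chain_boundary (Suc p) (hh p ((singular_subdivision p ^^ M) c)) + hh (p - Suc 0) (chain_boundary p ((singular_subdivision p ^^ M) c)))"
    by (simp add: chain_boundary_add algebra_simps)
  also have "\<dots> = ((singular_subdivision p ^^ M) c - c) + (singular_subdivision p ((singular_subdivision p ^^ M) c) - (singular_subdivision p ^^ M) c)"
    using Suc hh_eq[OF sc] by simp
  also have "\<dots> = (singular_subdivision p ^^ Suc M) c - c" by simp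
  finally show ?case .
qed

lemma Dm_split:
  assumes "m \<le> M"
  shows "Dm M p c - Dm m p c = (\<Sum>i\<in>{m..<M}. hh p ((singular_subdivision p ^^ i) c))"
proof -
  have "Dm M p c = Dm m p c + (\<Sum>i\<in>{m..<M}. hh p ((singular_subdivision p ^^ i) c))"
    unfolding Dm_def lessThan_atLeast0 using assms by (simp add: sum.atLeastLessThan_concat)
  then show ?thesis by simp
qed

definition small :: "'a topology \<Rightarrow> 'a set set \<Rightarrow> nat \<Rightarrow> 'a chain \<Rightarrow> bool" where
  "small X \<C> p c \<equiv> (\<forall>f\<in>Poly_Mapping.keys c. \<exists>V\<in>\<C>. singular_simplex p (subtopology X V) f)"

lemma small_0 [simp]: "small X \<C> p 0"
  by (simp add: small_def)

lemma small_diff: "small X \<C> p a \<Longrightarrow> small X \<C> p b \<Longrightarrow> small X \<C> p (a - b)"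
  unfolding small_def using keys_diff[of a b] by blast

lemma small_add: "small X \<C> p a \<Longrightarrow> small X \<C> p b \<Longrightarrow> small X \<C> p (a + b)"
  unfolding small_def using keys_add[of a b] by blast

lemma small_sum: "(\<And>i. i \<in> I \<Longrightarrow> small X \<C> p (f i)) \<Longrightarrow> small X \<C> p (\<Sum>i\<in>I. f i)"
  unfolding small_def using keys_sum[of f I] by blast

lemma small_extend: "(\<And>i. i \<in> Poly_Mapping.keys c \<Longrightarrow> small X \<C> p (f i)) \<Longrightarrow> small X \<C> p (frag_extend f c)"
  unfolding small_def using keys_frag_extend[of f c] by blast

lemma small_hh:
  assumes "small X \<C> p c"
  shows "small X \<C> (Suc p) (hh p c)"
proof -
  have "Poly_Mapping.keys c \<subseteq> {f. \<exists>V\<in>\<C>. singular_simplex p (subtopology X V) f}"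
    using assms by (auto simp: small_def)
  then show ?thesis
  proof (induction rule: frag_induction)
    case zero then show ?case by simp
  next
    case (one f)
    then obtain V where V: "V \<in> \<C>" "singular_simplex p (subtopology X V) f" by auto
    then have "singular_chain (Suc p) (subtopology X V) (hh p (frag_of f))"
      by (intro hh_chain) (simp add: singular_chain_of)
    then show ?case using V(1) by (auto simp: small_def singular_chain_def)
  next
    case (diff a b) then show ?case by (simp add: hh_diff small_diff)
  qed
qed

lemma small_sdi:
  assumes "small X \<C> p c"
  shows "small X \<C> p ((singular_subdivision p ^^ i) c)"
proof -
  have "Poly_Mapping.keys c \<subseteq> {f. \<exists>V\<in>\<C>. singular_simplex p (subtopology X V) f}"
    using assms by (auto simp: small_def)
  then show ?thesis
  proof (induction rule: frag_induction)
    case zero then show ?case by simp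
  next
    case (one f)
    then obtain V where V: "V \<in> \<C>" "singular_simplex p (subtopology X V) f" by auto
    then have "singular_chain p (subtopology X V) ((singular_subdivision p ^^ i) (frag_of f))"
      by (intro sdi_chain) (simp add: singular_chain_of)
    then show ?case using V(1) by (auto simp: small_def singular_chain_def)
  next
    case (diff a b) then show ?case by (simp add: singular_subdivision_power_diff small_diff)
  qed
qed

lemma eventually_small:
  assumes C: "\<And>U. U \<in> \<C> \<Longrightarrow> openin X U" and cov: "topspace X \<subseteq> \<Union>\<C>"
    and c: "singular_chain p X c"
  shows "\<exists>N. \<forall>m\<ge>N. small X \<C> p ((singular_subdivision p ^^ m) c)"
proof -
  obtain N where N: "\<And>m f. \<lbrakk>N \<le> m; f \<in> Poly_Mapping.keys ((singular_subdivision p ^^ m) c)\<rbrakk>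
                      \<Longrightarrow> \<exists>V \<in> \<C>. f \<in> (standard_simplex p) \<rightarrow> V"
    using sufficient_iterated_singular_subdivision_exists[OF C cov c] by metis
  have "small X \<C> p ((singular_subdivision p ^^ m) c)" if m: "N \<le> m" for m
    unfolding small_def
  proof
    fix f assume f: "f \<in> Poly_Mapping.keys ((singular_subdivision p ^^ m) c)"
    then have "singular_simplex p X f" using sdi_chain[OF c, of m] by (auto simp: singular_chain_def)
    moreover obtain V where "V \<in> \<C>" "f \<in> standard_simplex p \<rightarrow> V" using N[OF m f] by blast
    ultimately show "\<exists>V\<in>\<C>. singular_simplex p (subtopology X V) f"
      by (auto simp: singular_simplex_subtopology)
  qed
  then show ?thesis by blast
qed

lemma ev_small:
  assumes "small X \<C> n c" "\<And>\<sigma> U. U \<in> \<C> \<Longrightarrow> singular_simplex n (subtopology X U) \<sigma> \<Longrightarrow> z \<sigma> = 0"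
  shows "ev z c = 0"
  using assms by (intro ev_zero_on) (auto simp: small_def)



lemma frag_extend_fun_diff:
  "frag_extend (\<lambda>x. f x - g x) c = frag_extend f c - frag_extend g c"
proof -
  have "Poly_Mapping.keys c \<subseteq> UNIV" by simp
  then show ?thesis
  proof (induction rule: frag_induction)
    case zero then show ?case by simp
  next
    case (one x) then show ?case by simp
  next
    case (diff a b) then show ?case by (simp add: frag_extend_diff algebra_simps)
  qed
qed

lemma Dm_extend: "Dm M q c = frag_extend (\<lambda>\<tau>. Dm M q (frag_of \<tau>)) c"
proof -
  have "Poly_Mapping.keys c \<subseteq> UNIV" by simp
  then show ?thesis
  proof (induction rule: frag_induction)
    case zero then show ?case by simp
  next
    case (one x) then show ?case by simp
  next
    case (diff a b) then show ?case by (simp add: frag_extend_diff Dm_diff)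
  qed
qed

lemma small_cocycle:
  fixes z :: "('a, 'r::comm_ring_1) cochain"
  assumes C: "\<And>U. U \<in> \<C> \<Longrightarrow> openin X U" and cov: "topspace X \<subseteq> \<Union>\<C>"
    and zc: "cocycle n X z"
    and zs: "\<And>\<sigma> U. U \<in> \<C> \<Longrightarrow> singular_simplex n (subtopology X U) \<sigma> \<Longrightarrow> z \<sigma> = 0"
  shows "is_coboundary n X z"
proof -
  define q where "q = n - Suc 0"
  define mt where "mt \<tau> = (SOME N. \<forall>m\<ge>N. small X \<C> q ((singular_subdivision q ^^ m) (frag_of \<tau>)))" for \<tau>
  have mt: "\<forall>m\<ge>mt \<tau>. small X \<C> q ((singular_subdivision q ^^ m) (frag_of \<tau>))"
    if st0: "singular_simplex q X \<tau>" for \<tau>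
  proof -
    have sc0: "singular_chain q X (frag_of \<tau>)" using st0 by (simp add: singular_chain_of)
    have ex: "\<exists>N. \<forall>m\<ge>N. small X \<C> q ((singular_subdivision q ^^ m) (frag_of \<tau>))"
      by (rule eventually_small[OF C cov sc0])
    show ?thesis unfolding mt_def using someI_ex[OF ex] by blast
  qed
  define E where "E c = frag_extend (\<lambda>\<tau>. Dm (mt \<tau>) q (frag_of \<tau>)) c" for c
  have key: "z \<sigma> = - ev z (E (chain_boundary n (frag_of \<sigma>)))" if ss: "singular_simplex n X \<sigma>" for \<sigma>
  proof -
    define c where "c = frag_of \<sigma>"
    define d where "d = chain_boundary n c"
    have sc: "singular_chain n X c" using ss by (simp add: c_def singular_chain_of)
    have sd: "singular_chain q X d" using singular_chain_boundary[OF sc] by (simp add: q_def d_def)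
    obtain N0 where N0: "\<forall>m\<ge>N0. small X \<C> n ((singular_subdivision n ^^ m) c)"
      using eventually_small[OF C cov sc] by blast
    define M where "M = N0 + (\<Sum>\<tau>\<in>Poly_Mapping.keys d. mt \<tau>)"
    have M1: "N0 \<le> M" by (simp add: M_def)
    have M2: "mt \<tau> \<le> M" if "\<tau> \<in> Poly_Mapping.keys d" for \<tau>
      using member_le_sum[of \<tau> "Poly_Mapping.keys d" mt] that by (simp add: M_def)
    have eq: "chain_boundary (Suc n) (Dm M n c) + Dm M q d = (singular_subdivision n ^^ M) c - c"
      using Dm_eq[OF sc, of M] by (simp add: q_def d_def)
    define R where "R = frag_extend (\<lambda>\<tau>. Dm M q (frag_of \<tau>) - Dm (mt \<tau>) q (frag_of \<tau>)) d"
    have DR: "Dm M q d = E d + R"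
      unfolding R_def E_def frag_extend_fun_diff by (simp add: Dm_extend[symmetric])
    have Rs: "small X \<C> n R"
      unfolding R_def
    proof (rule small_extend)
      fix \<tau> assume \<tau>: "\<tau> \<in> Poly_Mapping.keys d"
      then have n0: "n \<noteq> 0" by (cases n) (auto simp: d_def chain_boundary_def)
      have st: "singular_simplex q X \<tau>" using sd \<tau> by (auto simp: singular_chain_def)
      have "Dm M q (frag_of \<tau>) - Dm (mt \<tau>) q (frag_of \<tau>) =
            (\<Sum>i\<in>{mt \<tau>..<M}. hh q ((singular_subdivision q ^^ i) (frag_of \<tau>)))"
        by (rule Dm_split[OF M2[OF \<tau>]])
      moreover have "small X \<C> (Suc q) (\<Sum>i\<in>{mt \<tau>..<M}. hh q ((singular_subdivision q ^^ i) (frag_of \<tau>)))"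
        using mt[OF st] by (intro small_sum small_hh) simp
      ultimately show "small X \<C> n (Dm M q (frag_of \<tau>) - Dm (mt \<tau>) q (frag_of \<tau>))"
        using n0 by (simp add: q_def)
    qed
    have "c = (singular_subdivision n ^^ M) c - chain_boundary (Suc n) (Dm M n c) - E d - R"
      using eq DR by (simp add: algebra_simps)
    then have "ev z c = ev z ((singular_subdivision n ^^ M) c) - ev z (chain_boundary (Suc n) (Dm M n c)) - ev z (E d) - ev z R"
      by (metis ev_diff)
    also have "ev z ((singular_subdivision n ^^ M) c) = 0"
      using N0 M1 zs by (intro ev_small) auto
    also have "ev z (chain_boundary (Suc n) (Dm M n c)) = 0"
      by (rule ev_cocycle_boundary[OF zc Dm_chain[OF sc]])
    also have "ev z R = 0"
      using Rs zs by (intro ev_small) auto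
    finally show ?thesis by (simp add: c_def d_def)
  qed
  define b where "b \<tau> = (if singular_simplex q X \<tau> then - ev z (E (frag_of \<tau>)) else 0)" for \<tau>
  have evb: "ev b c = - ev z (E c)" if "singular_chain q X c" for c
    using that unfolding singular_chain_def
  proof (induction rule: frag_induction)
    case zero then show ?case by (simp add: E_def)
  next
    case (one x) then show ?case by (simp add: b_def)
  next
    case (diff a b) then show ?case by (simp add: ev_diff E_def frag_extend_diff)
  qed
  have cz: "cochain n X z" using zc by (simp add: cocycle_def)
  show ?thesis
  proof (cases n)
    case 0
    have "z = (\<lambda>_. 0)"
    proof
      fix \<sigma>
      show "z \<sigma> = 0"
      proof (cases "singular_simplex n X \<sigma>")
        case True then show ?thesis using key[OF True] 0 by (simp add: E_def chain_boundary_def)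
      next
        case False then show ?thesis using cz by (simp add: cochain_def)
      qed
    qed
    then show ?thesis using 0 by (simp add: is_coboundary_def)
  next
    case (Suc m)
    have qm: "q = m" using Suc by (simp add: q_def)
    have "z = coboundary m X b"
    proof
      fix \<sigma>
      show "z \<sigma> = coboundary m X b \<sigma>"
      proof (cases "singular_simplex (Suc m) X \<sigma>")
        case True
        have "singular_chain m X (chain_boundary (Suc m) (frag_of \<sigma>))"
          using True by (simp add: singular_chain_boundary_alt singular_chain_of)
        then show ?thesis using key True Suc qm by (simp add: coboundary_ev evb)
      next
        case False then show ?thesis using cz Suc by (simp add: cochain_def coboundary_def)
      qed
    qed
    moreover have "cochain m X b" by (simp add: cochain_def b_def qm)
    ultimately show ?thesis using Suc is_coboundary_SucI by blast
  qed
qed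



lemma gpullback_sub:
  "gpullback (subtopology X V) id u n \<sigma> = (if singular_simplex n (subtopology X V) \<sigma> then u n \<sigma> else 0)"
  by (auto simp: gpullback_def pullback_def singular_simplex_def extensional_restrict)

lemma gcocycle_gcocyc: "gcocycle X u \<Longrightarrow> gcocyc X u"
  by (simp add: gcocycle_def gcocyc_def)

lemma modify:
  assumes gc: "gcocyc X u"
    and hc: "cohomologous (subtopology X V) (gpullback (subtopology X V) id u) gzero"
  shows "\<exists>w. gcocyc X w \<and> cohomologous X u w \<and> vanish X V w"
proof -
  let ?A = "subtopology X V"
  have hcn: "is_coboundary n ?A (\<lambda>\<sigma>. if singular_simplex n ?A \<sigma> then u n \<sigma> else 0)" for n
    using hc by (simp add: cohomologous_def gpullback_sub gzero_def)
  have "\<forall>m. \<exists>b. cochain m ?A b \<and> (\<lambda>\<sigma>. if singular_simplex (Suc m) ?A \<sigma> then u (Suc m) \<sigma> else 0) = coboundary m ?A b"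
    using hcn by (meson is_coboundary_SucD)
  then obtain \<beta> where \<beta>: "\<And>m. cochain m ?A (\<beta> m)"
     "\<And>m. (\<lambda>\<sigma>. if singular_simplex (Suc m) ?A \<sigma> then u (Suc m) \<sigma> else 0) = coboundary m ?A (\<beta> m)"
    by metis
  have \<beta>X: "cochain m X (\<beta> m)" for m
    using \<beta>(1)[of m] by (auto simp: cochain_def singular_simplex_subtopology)
  have u0: "u 0 \<sigma> = 0" if "singular_simplex 0 ?A \<sigma>" for \<sigma>
    using is_coboundary_0D[OF hcn[of 0]] that by (metis (mono_tags))
  define w where "w n = (case n of 0 \<Rightarrow> u 0 | Suc m \<Rightarrow> (\<lambda>\<sigma>. u (Suc m) \<sigma> - coboundary m X (\<beta> m) \<sigma>))" for n
  have cu: "cocycle n X (u n)" for n using gc by (simp add: gcocyc_def)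
  have "gcocyc X w"
    unfolding gcocyc_def
  proof
    fix n show "cocycle n X (w n)"
    proof (cases n)
      case 0 then show ?thesis using cu by (simp add: w_def)
    next
      case (Suc m)
      have "cochain (Suc m) X (w n)"
        using cu[of n] Suc by (simp add: w_def cocycle_def cochain_def coboundary_def)
      moreover have "coboundary (Suc m) X (w n) = (\<lambda>_. 0)"
        using cu[of n] Suc by (simp add: w_def cocycle_def coboundary_diff coboundary_coboundary)
      ultimately show ?thesis using Suc by (simp add: cocycle_def)
    qed
  qed
  moreover have "cohomologous X u w"
    unfolding cohomologous_def
  proof
    fix n show "is_coboundary n X (\<lambda>\<sigma>. u n \<sigma> - w n \<sigma>)"
    proof (cases n)
      case 0 then show ?thesis by (simp add: w_def)
    next
      case (Suc m)
      have "(\<lambda>\<sigma>. u n \<sigma> - w n \<sigma>) = coboundary m X (\<beta> m)"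
        using Suc by (simp add: w_def)
      then show ?thesis using Suc \<beta>X is_coboundary_SucI by blast
    qed
  qed
  moreover have "vanish X V w"
    unfolding vanish_def
  proof (intro allI impI)
    fix n \<sigma> assume ss: "singular_simplex n ?A \<sigma>"
    show "w n \<sigma> = 0"
    proof (cases n)
      case 0 then show ?thesis using u0 ss by (simp add: w_def)
    next
      case (Suc m)
      have ssX: "singular_simplex (Suc m) X \<sigma>" using ss Suc by (simp add: singular_simplex_subtopology)
      have "u (Suc m) \<sigma> = coboundary m ?A (\<beta> m) \<sigma>"
        using fun_cong[OF \<beta>(2)[of m], of \<sigma>] ss Suc by simp
      also have "\<dots> = coboundary m X (\<beta> m) \<sigma>"
        using ss ssX Suc by (simp add: coboundary_def)
      finally show ?thesis using Suc by (simp add: w_def)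
    qed
  qed
  ultimately show ?thesis by blast
qed

lemma cover_zero:
  assumes op: "\<And>j. j \<le> k \<Longrightarrow> openin X (V j)" and cov: "topspace X \<subseteq> (\<Union>j\<le>k. V j)"
    and gc: "\<And>j. j \<le> k \<Longrightarrow> gcocyc X (u j)"
    and hc: "\<And>j. j \<le> k \<Longrightarrow> cohomologous (subtopology X (V j)) (gpullback (subtopology X (V j)) id (u j)) gzero"
  shows "cohomologous X (cupprod X u k) gzero"
proof -
  have "\<forall>j. \<exists>w. j \<le> k \<longrightarrow> gcocyc X w \<and> cohomologous X (u j) w \<and> vanish X (V j) w"
    using modify gc hc by blast
  then obtain W where W: "\<And>j. j \<le> k \<Longrightarrow> gcocyc X (W j) \<and> cohomologous X (u j) (W j) \<and> vanish X (V j) (W j)"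
    by metis
  have c1: "cohomologous X (cupprod X u k) (cupprod X W k)"
    using gc W by (intro cupprod_cohom) auto
  have cw: "gcocyc X (cupprod X W k)" using W by (intro cupprod_cocyc) auto
  have c2: "is_coboundary n X (cupprod X W k n)" for n
  proof (rule small_cocycle[where \<C> = "V ` {..k}"])
    show "\<And>U. U \<in> V ` {..k} \<Longrightarrow> openin X U" using op by auto
    show "topspace X \<subseteq> \<Union> (V ` {..k})" using cov by auto
    show "cocycle n X (cupprod X W k n)" using cw by (simp add: gcocyc_def)
    fix \<sigma> U assume U: "U \<in> V ` {..k}" and ss: "singular_simplex n (subtopology X U) \<sigma>"
    then obtain j where j: "j \<le> k" "U = V j" by auto
    have "vanish X (V j) (cupprod X W k)" using W[OF j(1)] j(1) by (intro cupprod_vanish[of j]) auto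
    then show "cupprod X W k n \<sigma> = 0" using ss j by (simp add: vanish_def)
  qed
  show ?thesis
    unfolding cohomologous_def gzero_def
  proof
    fix n
    have "is_coboundary n X (\<lambda>\<sigma>. (cupprod X u k n \<sigma> - cupprod X W k n \<sigma>) + cupprod X W k n \<sigma>)"
      using c1 c2 by (intro is_coboundary_add) (auto simp: cohomologous_def)
    then show "is_coboundary n X (\<lambda>\<sigma>. cupprod X u k n \<sigma> - 0)" by simp
  qed
qed



lemma hdist_le:
  assumes "\<forall>i\<le>m. openin X' (W i)" "(\<Union>i\<le>m. W i) = topspace X'"
    "\<forall>i\<le>m. homotopic_with (\<lambda>h. True) (subtopology X' (W i)) Y f g"
  shows "hdist X' Y f g \<le> enat m"
proof -
  let ?P = "\<lambda>n. \<exists>U :: nat \<Rightarrow> 'a set. (\<forall>j\<le>n. openin X' (U j)) \<and> (\<Union>j\<le>n. U j) = topspace X'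
                \<and> (\<forall>j\<le>n. homotopic_with (\<lambda>h. True) (subtopology X' (U j)) Y f g)"
  have Pm: "?P m" using assms by blast
  then have ex: "\<exists>n. ?P n" by blast
  have "hdist X' Y f g = enat (LEAST n. ?P n)"
    unfolding hdist_def Let_def using ex by simp
  also have "\<dots> \<le> enat m" using Least_le[of ?P m, OF Pm] by simp
  finally show ?thesis .
qed

lemma hdist_cover:
  assumes "hdist X Y f g = enat n"
  shows "\<exists>U :: nat \<Rightarrow> 'a set. (\<forall>j\<le>n. openin X (U j)) \<and> (\<Union>j\<le>n. U j) = topspace X
                \<and> (\<forall>j\<le>n. homotopic_with (\<lambda>h. True) (subtopology X (U j)) Y f g)"
proof -
  let ?P = "\<lambda>n. \<exists>U :: nat \<Rightarrow> 'a set. (\<forall>j\<le>n. openin X (U j)) \<and> (\<Union>j\<le>n. U j) = topspace X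
                \<and> (\<forall>j\<le>n. homotopic_with (\<lambda>h. True) (subtopology X (U j)) Y f g)"
  have ex: "\<exists>n. ?P n"
  proof (rule ccontr)
    assume "\<not> (\<exists>n. ?P n)"
    then have "hdist X Y f g = \<infinity>" unfolding hdist_def Let_def by simp
    then show False using assms by simp
  qed
  then have "hdist X Y f g = enat (LEAST n. ?P n)" unfolding hdist_def Let_def by simp
  then have "(LEAST n. ?P n) = n" using assms by simp
  then show ?thesis using LeastI_ex[OF ex] by simp
qed

definition Pk :: "'a topology \<Rightarrow> 'b topology \<Rightarrow> ('a \<Rightarrow> 'b) \<Rightarrow> ('a \<Rightarrow> 'b)
    \<Rightarrow> (nat \<Rightarrow> ('a, 'r::comm_ring_1) cochain) \<Rightarrow> nat \<Rightarrow> bool" where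
  "Pk X Y f g u k \<equiv> (\<forall>(A :: 'a topology) \<phi>. continuous_map A X \<phi> \<and>
              hdist A Y (f \<circ> \<phi>) (g \<circ> \<phi>) \<le> enat k \<longrightarrow> cohomologous A (gpullback A \<phi> u) gzero)"

lemma hw_P:
  assumes "\<not> cohomologous X u gzero" "enat (Suc k) \<le> hw X Y f g u"
  shows "Pk X Y f g u k"
proof (rule ccontr)
  assume nP: "\<not> Pk X Y f g u k"
  let ?S = "{0} \<union> {enat (Suc k) | k. \<forall>(A :: 'a topology) \<phi>. continuous_map A X \<phi> \<and>
              hdist A Y (f \<circ> \<phi>) (g \<circ> \<phi>) \<le> enat k \<longrightarrow> cohomologous A (gpullback A \<phi> u) gzero}"
  have hw: "hw X Y f g u = Sup ?S" using assms(1) by (simp add: hw_def)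
  have "Sup ?S \<le> enat k"
  proof (rule Sup_least)
    fix x assume "x \<in> ?S"
    then consider "x = 0" | k' where "x = enat (Suc k')" "Pk X Y f g u k'"
      unfolding Pk_def by blast
    then show "x \<le> enat k"
    proof cases
      case 1 then show ?thesis by simp
    next
      case 2
      have "k' < k"
      proof (rule ccontr)
        assume "\<not> k' < k"
        then have "enat k \<le> enat k'" by simp
        then have "Pk X Y f g u k" using 2(2) unfolding Pk_def using order_trans by blast
        then show False using nP by simp
      qed
      then show ?thesis using 2 by simp
    qed
  qed
  then have "enat (Suc k) \<le> enat k" using assms(2) hw by (metis order_trans)
  then show False by simp
qed

lemma gpullback_id: "gcocyc X v \<Longrightarrow> gpullback X id v = v"
  by (auto simp: gpullback_def pullback_def singular_simplex_def extensional_restrict gcocyc_def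
      cocycle_def cochain_def fun_eq_iff)

lemma empty_hc: "cohomologous (subtopology X {}) (gpullback (subtopology X {}) id v) gzero"
proof -
  have "gpullback (subtopology X {}) id v = gzero"
    by (auto simp: gpullback_def pullback_def gzero_def fun_eq_iff singular_simplex_empty)
  then show ?thesis by (simp add: cohomologous_def gzero_def)
qed



lemma sum_enat_nat: "(\<Sum>j\<le>(k::nat). enat (H j)) = enat (\<Sum>j\<le>k. H j)"
  by (induction k) (simp_all)

theorem theorem5p10:
  fixes X :: "'a topology" and Y :: "'b topology" and f g :: "'a \<Rightarrow> 'b"
    and u :: "nat \<Rightarrow> nat \<Rightarrow> ('a, 'r::comm_ring_1) cochain" and k :: nat
  assumes "continuous_map X Y f" and "continuous_map X Y g"
    and "\<And>j. j \<le> k \<Longrightarrow> in_J X Y f g (u j)"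
    and "\<not> cohomologous X (cupprod X u k) gzero"
  shows "hdist X Y f g \<ge> (\<Sum>j\<le>k. hw X Y f g (u j))"
proof (cases "hdist X Y f g")
  case infinity
  then show ?thesis by simp
next
  case (enat n)
  obtain U where U: "\<forall>j\<le>n. openin X (U j)" "(\<Union>j\<le>n. U j) = topspace X"
    "\<forall>j\<le>n. homotopic_with (\<lambda>h. True) (subtopology X (U j)) Y f g"
    using hdist_cover[OF enat] by blast
  have gc: "gcocyc X (u j)" if "j \<le> k" for j
    using assms(3)[OF that] by (simp add: in_J_def gcocycle_gcocyc)
  show ?thesis
  proof (rule ccontr)
    assume neg: "\<not> (\<Sum>j\<le>k. hw X Y f g (u j)) \<le> hdist X Y f g"
    have "cohomologous X (cupprod X u k) gzero"
    proof (cases "\<exists>j0\<le>k. cohomologous X (u j0) gzero")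
      case True
      then obtain j0 where j0: "j0 \<le> k" "cohomologous X (u j0) gzero" by blast
      define V where "V j = (if j = j0 then topspace X else {})" for j
      show ?thesis
      proof (rule cover_zero[where V = V])
        show "openin X (V j)" for j by (simp add: V_def)
        show "topspace X \<subseteq> (\<Union>j\<le>k. V j)" using j0 by (auto simp: V_def)
        show "gcocyc X (u j)" if "j \<le> k" for j using gc that .
        show "cohomologous (subtopology X (V j)) (gpullback (subtopology X (V j)) id (u j)) gzero"
          if "j \<le> k" for j
        proof (cases "j = j0")
          case True
          then show ?thesis using j0 gpullback_id[OF gc[OF that]] by (simp add: V_def)
        next
          case False
          then show ?thesis using empty_hc by (simp add: V_def)
        qed
      qed
    next
      case False
      have hle: "hw X Y f g (u j) \<le> enat n" if j: "j \<le> k" for j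
      proof (rule ccontr)
        assume "\<not> hw X Y f g (u j) \<le> enat n"
        then have "enat (Suc n) \<le> hw X Y f g (u j)"
          by (simp add: Suc_ile_eq)
        then have P: "Pk X Y f g (u j) n" using False j by (intro hw_P) auto
        have c1: "continuous_map X X id" by simp
        have c2: "hdist X Y (f \<circ> id) (g \<circ> id) \<le> enat n" using enat by simp
        have "cohomologous X (gpullback X id (u j)) gzero"
          using P c1 c2 unfolding Pk_def by blast
        then show False using False j gpullback_id[OF gc[OF j]] by auto
      qed
      have "\<forall>j. \<exists>h. j \<le> k \<longrightarrow> hw X Y f g (u j) = enat h"
        using hle enat_ile by blast
      then obtain H where H: "\<And>j. j \<le> k \<Longrightarrow> hw X Y f g (u j) = enat (H j)" by metis
      have "(\<Sum>j\<le>k. hw X Y f g (u j)) = (\<Sum>j\<le>k. enat (H j))"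
        by (rule sum.cong) (simp_all add: H)
      also have "\<dots> = enat (\<Sum>j\<le>k. H j)" by (rule sum_enat_nat)
      finally have "n < (\<Sum>j\<le>k. H j)" using neg enat by simp
      define S where "S j = (\<Sum>i<j. H i)" for j
      have Ssuc: "S (Suc j) = S j + H j" for j by (simp add: S_def)
      have Sk: "S (Suc k) = (\<Sum>j\<le>k. H j)" by (simp add: S_def lessThan_Suc_atMost)
      define V where "V j = \<Union> {U i | i. i \<le> n \<and> S j \<le> i \<and> i < S j + H j}" for j
      have Vsub: "V j \<subseteq> topspace X" for j
        using U(1) by (auto simp: V_def dest: openin_subset)
      show ?thesis
      proof (rule cover_zero[where V = V])
        show "openin X (V j)" for j unfolding V_def using U(1) by auto
        show "topspace X \<subseteq> (\<Union>j\<le>k. V j)"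
        proof
          fix x assume "x \<in> topspace X"
          then obtain i where i: "i \<le> n" "x \<in> U i" using U(2) by auto
          define j where "j = (LEAST j. i < S (Suc j))"
          have ik: "i < S (Suc k)" using Sk \<open>n < (\<Sum>j\<le>k. H j)\<close> i by simp
          have jk: "j \<le> k" unfolding j_def by (rule Least_le) (rule ik)
          have ij: "i < S (Suc j)" unfolding j_def by (rule LeastI) (rule ik)
          have ji: "S j \<le> i"
          proof (cases j)
            case 0 then show ?thesis by (simp add: S_def)
          next
            case (Suc j')
            have "\<not> i < S (Suc j')" unfolding j_def
              using not_less_Least[of j' "\<lambda>j. i < S (Suc j)"] Suc j_def by simp
            then show ?thesis using Suc by simp
          qed
          have "x \<in> V j" using i ij ji Ssuc unfolding V_def by auto
          then show "x \<in> (\<Union>j\<le>k. V j)" using jk by auto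
        qed
        show "gcocyc X (u j)" if "j \<le> k" for j using gc that .
        show "cohomologous (subtopology X (V j)) (gpullback (subtopology X (V j)) id (u j)) gzero"
          if j: "j \<le> k" for j
        proof (cases "H j = 0")
          case True
          then have "V j = {}" by (auto simp: V_def)
          then show ?thesis using empty_hc by simp
        next
          case False
          have "enat (Suc (H j - 1)) \<le> hw X Y f g (u j)" using False H[OF j] by simp
          then have P: "Pk X Y f g (u j) (H j - 1)" using \<open>\<not> (\<exists>j0\<le>k. cohomologous X (u j0) gzero)\<close> j
            by (intro hw_P) auto
          define W where "W i = (if S j + i \<le> n then U (S j + i) else {})" for i
          have Wsub: "W i \<subseteq> V j" if iH: "i \<le> H j - 1" for i
          proof
            fix x assume x: "x \<in> W i"
            then have c: "S j + i \<le> n" "x \<in> U (S j + i)" by (auto simp: W_def split: if_splits)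
            have "S j + i < S j + H j" using iH False by linarith
            then have "U (S j + i) \<in> {U i | i. i \<le> n \<and> S j \<le> i \<and> i < S j + H j}" using c by auto
            then show "x \<in> V j" unfolding V_def using c(2) by (rule UnionI)
          qed
          have "hdist (subtopology X (V j)) Y (f \<circ> id) (g \<circ> id) \<le> enat (H j - 1)"
          proof (rule hdist_le[where W = W])
            show "\<forall>i\<le>H j - 1. openin (subtopology X (V j)) (W i)"
            proof (intro allI impI)
              fix i assume i: "i \<le> H j - 1"
              have "openin X (W i)" using U(1) by (simp add: W_def)
              then have o: "openin (subtopology X (V j)) (W i \<inter> V j)" by (rule openin_subtopology_Int)
              have e: "W i \<inter> V j = W i" using Wsub[OF i] by blast
              show "openin (subtopology X (V j)) (W i)" using o by (simp only: e)
            qed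
            show "(\<Union>i\<le>H j - 1. W i) = topspace (subtopology X (V j))"
            proof
              show "(\<Union>i\<le>H j - 1. W i) \<subseteq> topspace (subtopology X (V j))"
                using Wsub Vsub by auto
              show "topspace (subtopology X (V j)) \<subseteq> (\<Union>i\<le>H j - 1. W i)"
              proof
                fix x assume "x \<in> topspace (subtopology X (V j))"
                then have "x \<in> V j" by simp
                then obtain i' where i': "i' \<le> n" "S j \<le> i'" "i' < S j + H j" "x \<in> U i'"
                  unfolding V_def by auto
                have w: "W (i' - S j) = U i'" using i' by (simp add: W_def)
                have le: "i' - S j \<in> {..H j - 1}" using i' by simp
                have "x \<in> W (i' - S j)" using w i'(4) by simp
                then show "x \<in> (\<Union>i\<le>H j - 1. W i)" using le by (rule UN_I[rotated])
              qed
            qed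
            show "\<forall>i\<le>H j - 1. homotopic_with (\<lambda>h. True) (subtopology (subtopology X (V j)) (W i)) Y (f \<circ> id) (g \<circ> id)"
            proof (intro allI impI)
              fix i assume i: "i \<le> H j - 1"
              have "subtopology (subtopology X (V j)) (W i) = subtopology X (W i)"
                using Wsub[OF i] by (simp add: subtopology_subtopology Int_absorb1)
              moreover have "homotopic_with (\<lambda>h. True) (subtopology X (W i)) Y f g"
                using U(3) by (simp add: W_def homotopic_on_emptyI)
              ultimately show "homotopic_with (\<lambda>h. True) (subtopology (subtopology X (V j)) (W i)) Y (f \<circ> id) (g \<circ> id)"
                by simp
            qed
          qed
          moreover have "continuous_map (subtopology X (V j)) X id" by simp
          ultimately show ?thesis using P unfolding Pk_def by blast
        qed
      qed
    qed
    then show False using assms(4) by simp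
  qed
qed

end
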